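(* Let $a<b$, $M$ an even positive integer, $h=(b-a)/M$, $\tau>0$, $0<\varepsilon\le1$, and let $V^0,A_1^0$ be real constants. For $l=-M/2,\dots,M/2-1$ let $\mu_l=2l\pi/(b-a)$. Consider the leap-frog finite difference (LFFD) scheme with constant potentials $V\equiv V^0$, $A_1\equiv A_1^0$ described in the context, and its von Neumann amplification factors: for each $l$, the complex numbers $\xi$ satisfying $$\det\Big[(\xi^2-1)I_2+2i\tau\xi\Big(\frac{\sigma_3}{\varepsilon}+V^0I_2-A_1^0\sigma_1+\frac{\sin(\mu_lh)}{\varepsilon h}\sigma_1\Big)\Big]=0.$$ If $$0<\tau\le\frac{\varepsilon h}{|V^0|\varepsilon h+\sqrt{h^2+(|A_1^0|\varepsilon h+1)^2}},$$ then every such amplification factor satisfies $|\xi|\le1$ for every $l=-M/2,\dots,M/2-1$, i.e. the LFFD scheme is linearly (von Neumann) stable.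
   Context: Pauli matrices: $\sigma_1=\begin{pmatrix}0&1\\1&0\end{pmatrix}$, $\sigma_3=\begin{pmatrix}1&0\\0&-1\end{pmatrix}$; $I_2$ the $2\times2$ identity. Grid: $x_j=a+jh$, $t_n=n\tau$, periodic convention $\varPhi^n_M=\varPhi^n_0$, $\varPhi^n_{-1}=\varPhi^n_{M-1}$, $\varPhi^n_{M+1}=\varPhi^n_1$; $\delta_t\varPhi^n_j=(\varPhi^{n+1}_j-\varPhi^{n-1}_j)/(2\tau)$, $\delta_x\varPhi^n_j=(\varPhi^n_{j+1}-\varPhi^n_{j-1})/(2h)$. The LFFD scheme with constant potentials is, for $n\ge1$, $j=0,\dots,M-1$, $$i\delta_t\varPhi^n_j=\frac1\varepsilon(-i\sigma_1\delta_x+\sigma_3)\varPhi^n_j+(V^0I_2-A_1^0\sigma_1)\varPhi^n_j.$$ The amplification factors arise by substituting $\varPhi^n_j=\sum_{l}\xi_l^n\widehat{\varPhi}_l e^{2ijl\pi/M}$ (with $\widehat{\varPhi}_l\in\mathbb{C}^2$) into the scheme. *)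

theory Defs
  imports "HOL-Analysis.Analysis"
begin

definition sigma1 :: "complex^2^2" where
  "sigma1 = vector [vector [0, 1], vector [1, 0]]"

definition sigma3 :: "complex^2^2" where
  "sigma3 = vector [vector [1, 0], vector [0, -1]]"

definition I2 :: "complex^2^2" where
  "I2 = mat 1"

definition cscale :: "complex \<Rightarrow> complex^2^2 \<Rightarrow> complex^2^2" where
  "cscale c A = mat c ** A"

definition lffd_symbol ::
  "real \<Rightarrow> real \<Rightarrow> real \<Rightarrow> real \<Rightarrow> real \<Rightarrow> real \<Rightarrow> complex \<Rightarrow> complex^2^2" where
  "lffd_symbol \<tau> \<epsilon> h V0 A0 \<mu> \<xi> =
     cscale (\<xi>\<^sup>2 - 1) I2 +
     cscale (2 * \<i> * of_real \<tau> * \<xi>)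
       (cscale (of_real (1 / \<epsilon>)) sigma3 + cscale (of_real V0) I2
        - cscale (of_real A0) sigma1
        + cscale (of_real (sin (\<mu> * h) / (\<epsilon> * h))) sigma1)"

end

theory Submission
  imports Defs
begin

lemma detgen: "det (cscale y I2 + cscale c (cscale p sigma3 + cscale v I2 - cscale a sigma1 + cscale q sigma1))
   = (y + c * v)\<^sup>2 - c\<^sup>2 * (p\<^sup>2 + (q-a)\<^sup>2)"
  unfolding det_2 cscale_def I2_def sigma1_def sigma3_def
  apply (simp add: matrix_matrix_mult_def UNIV_2 vector_def mat_def)
  apply (simp add: algebra_simps power2_eq_square)
  done
lemma rootlem:
  fixes \<beta> :: real and z :: complex
  assumes "\<bar>\<beta>\<bar> \<le> 1" and "z\<^sup>2 + 2 * \<i> * of_real \<beta> * z - 1 = 0"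
  shows "cmod z \<le> 1"
proof -
  obtain x y where z: "z = Complex x y" by (cases z)
  from assms(2) have re: "x^2 - y^2 - 2*\<beta>*y - 1 = 0" and im: "2*x*y + 2*\<beta>*x = 0"
    unfolding z by (simp_all add: complex_eq_iff power2_eq_square algebra_simps)
  have "x * (y + \<beta>) = 0" using im by (simp add: algebra_simps)
  then have "x = 0 \<or> y = - \<beta>" by auto
  then have "x^2 + y^2 \<le> 1"
  proof
    assume x0: "x = 0"
    then have "(y+\<beta>)^2 = \<beta>^2 - 1" using re by (simp add: power2_eq_square algebra_simps)
    moreover have "\<beta>^2 \<le> 1" using assms(1) by (metis abs_le_square_iff abs_one one_power2)
    moreover have "(y+\<beta>)^2 \<ge> 0" by simp
    ultimately have "(y+\<beta>)^2 = 0" "\<beta>^2 = 1" by linarith+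
    then have "y = - \<beta>" by simp
    then have "y^2 = 1" using \<open>\<beta>^2 = 1\<close> by simp
    then show ?thesis using x0 by simp
  next
    assume "y = - \<beta>"
    then show ?thesis using re by (simp add: power2_eq_square algebra_simps)
  qed
  then show ?thesis unfolding z cmod_def by (simp add: power2_eq_square)
qed
theorem lemma4:
  fixes a b \<tau> \<epsilon> V0 A0 :: real and M :: nat
  assumes "a < b" and "even M" and "M > 0"
    and "0 < \<epsilon>" and "\<epsilon> \<le> 1"
    and "0 < \<tau>"
    and "\<tau> \<le> (\<epsilon> * ((b - a) / real M)) /
              (\<bar>V0\<bar> * \<epsilon> * ((b - a) / real M)
               + sqrt (((b - a) / real M)\<^sup>2
                       + (\<bar>A0\<bar> * \<epsilon> * ((b - a) / real M) + 1)\<^sup>2))"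
  shows "\<forall>(l::int) (\<xi>::complex).
           - (int M div 2) \<le> l \<and> l \<le> int M div 2 - 1 \<and>
           det (lffd_symbol \<tau> \<epsilon> ((b - a) / real M) V0 A0
                  (2 * real_of_int l * pi / (b - a)) \<xi>) = 0
           \<longrightarrow> cmod \<xi> \<le> 1"
proof (intro allI impI)
  fix l :: int and \<xi> :: complex
  assume H: "- (int M div 2) \<le> l \<and> l \<le> int M div 2 - 1 \<and>
           det (lffd_symbol \<tau> \<epsilon> ((b - a) / real M) V0 A0
                  (2 * real_of_int l * pi / (b - a)) \<xi>) = 0"
  define h where "h = (b - a) / real M"
  define m where "m = 2 * real_of_int l * pi / (b - a)"
  define s where "s = sin (m * h) / (\<epsilon> * h)"
  define w where "w = sqrt ((1/\<epsilon>)\<^sup>2 + (s - A0)\<^sup>2)"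
  define S where "S = sqrt (h\<^sup>2 + (\<bar>A0\<bar> * \<epsilon> * h + 1)\<^sup>2)"
  define W where "W = sqrt ((1/\<epsilon>)\<^sup>2 + (1/(\<epsilon>*h) + \<bar>A0\<bar>)\<^sup>2)"
  have hpos: "h > 0" unfolding h_def using assms by simp
  have eh: "\<epsilon> * h > 0" using hpos assms by simp
  have det0: "det (lffd_symbol \<tau> \<epsilon> h V0 A0 m \<xi>) = 0" using H unfolding h_def m_def by simp
  let ?c = "2 * \<i> * complex_of_real \<tau> * \<xi>"
  have "det (lffd_symbol \<tau> \<epsilon> h V0 A0 m \<xi>) = (\<xi>\<^sup>2 - 1 + ?c * of_real V0)\<^sup>2
     - ?c\<^sup>2 * ((of_real (1/\<epsilon>))\<^sup>2 + (of_real s - of_real A0)\<^sup>2)"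
    unfolding lffd_symbol_def s_def by (rule detgen)
  also have "(of_real (1/\<epsilon>))\<^sup>2 + (of_real s - of_real A0)\<^sup>2 = (complex_of_real w)\<^sup>2"
  proof -
    have "(complex_of_real w)\<^sup>2 = of_real (w\<^sup>2)" by simp
    also have "w\<^sup>2 = (1/\<epsilon>)\<^sup>2 + (s - A0)\<^sup>2" unfolding w_def by simp
    finally show ?thesis by simp
  qed
  finally have "(\<xi>\<^sup>2 - 1 + ?c * of_real V0)\<^sup>2 - ?c\<^sup>2 * (complex_of_real w)\<^sup>2 = 0" using det0 by simp
  then have "(\<xi>\<^sup>2 - 1 + ?c * of_real (V0 - w)) * (\<xi>\<^sup>2 - 1 + ?c * of_real (V0 + w)) = 0"
    by (simp add: algebra_simps power2_eq_square)
  then have "(\<xi>\<^sup>2 - 1 + ?c * of_real (V0 - w)) = 0 \<or> (\<xi>\<^sup>2 - 1 + ?c * of_real (V0 + w)) = 0"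
    by (simp only: mult_eq_0_iff)
  moreover have "\<xi>\<^sup>2 - 1 + ?c * of_real (V0 - w) = \<xi>\<^sup>2 + 2 * \<i> * of_real (\<tau> * (V0 - w)) * \<xi> - 1"
    "\<xi>\<^sup>2 - 1 + ?c * of_real (V0 + w) = \<xi>\<^sup>2 + 2 * \<i> * of_real (\<tau> * (V0 + w)) * \<xi> - 1"
    by (simp_all add: algebra_simps)
  ultimately have "\<xi>\<^sup>2 + 2 * \<i> * of_real (\<tau> * (V0 - w)) * \<xi> - 1 = 0 \<or>
             \<xi>\<^sup>2 + 2 * \<i> * of_real (\<tau> * (V0 + w)) * \<xi> - 1 = 0"
    by metis
  moreover have "\<tau> * (\<bar>V0\<bar> + w) \<le> 1"
  proof -
    have "\<bar>sin (m*h)\<bar> \<le> 1" by simp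
    then have "\<bar>s\<bar> \<le> 1/(\<epsilon>*h)" unfolding s_def using eh by (simp add: abs_divide divide_right_mono)
    then have "\<bar>s - A0\<bar> \<le> 1/(\<epsilon>*h) + \<bar>A0\<bar>" by linarith
    then have "(s - A0)\<^sup>2 \<le> (1/(\<epsilon>*h) + \<bar>A0\<bar>)\<^sup>2"
      by (metis abs_ge_zero abs_le_square_iff abs_of_nonneg add_nonneg_nonneg eh less_imp_le zero_le_divide_1_iff)
    then have wW: "w \<le> W" unfolding w_def W_def by simp
    have "W * (\<epsilon> * h) = sqrt (((1/\<epsilon>)\<^sup>2 + (1/(\<epsilon>*h) + \<bar>A0\<bar>)\<^sup>2) * (\<epsilon>*h)\<^sup>2)"
      unfolding W_def using eh by (simp add: real_sqrt_mult)
    also have "((1/\<epsilon>)\<^sup>2 + (1/(\<epsilon>*h) + \<bar>A0\<bar>)\<^sup>2) * (\<epsilon>*h)\<^sup>2 = h\<^sup>2 + (\<bar>A0\<bar> * \<epsilon> * h + 1)\<^sup>2"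
      using eh hpos assms(4) by (simp add: field_simps power2_eq_square)
    finally have WS: "W * (\<epsilon> * h) = S" unfolding S_def .
    have Spos: "S \<ge> 0" unfolding S_def by simp
    have "\<tau> \<le> (\<epsilon> * h) / (\<bar>V0\<bar> * \<epsilon> * h + S)" using assms(7) unfolding h_def S_def by simp
    moreover have "\<bar>V0\<bar> * \<epsilon> * h + S > 0"
    proof -
      have "S > 0" unfolding S_def using hpos by (simp add: add_pos_nonneg)
      moreover have "\<bar>V0\<bar> * \<epsilon> * h \<ge> 0" using eh by (simp add: mult.assoc)
      ultimately show ?thesis by linarith
    qed
    ultimately have "\<tau> * (\<bar>V0\<bar> * \<epsilon> * h + S) \<le> \<epsilon> * h" by (simp add: le_divide_eq)
    then have "\<tau> * (\<bar>V0\<bar> * \<epsilon> * h + W * (\<epsilon> * h)) \<le> \<epsilon> * h" using WS by simp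
    then have "\<tau> * (\<bar>V0\<bar> + W) * (\<epsilon> * h) \<le> 1 * (\<epsilon> * h)" by (simp add: algebra_simps)
    then have "\<tau> * (\<bar>V0\<bar> + W) \<le> 1" using eh by (simp only: mult_le_cancel_right_pos)
    moreover have "\<tau> * (\<bar>V0\<bar> + w) \<le> \<tau> * (\<bar>V0\<bar> + W)" using wW assms(6) by simp
    ultimately show ?thesis by linarith
  qed
  moreover have "w \<ge> 0" unfolding w_def by simp
  ultimately show "cmod \<xi> \<le> 1"
  proof -
    assume A: "\<xi>\<^sup>2 + 2 * \<i> * of_real (\<tau> * (V0 - w)) * \<xi> - 1 = 0 \<or>
             \<xi>\<^sup>2 + 2 * \<i> * of_real (\<tau> * (V0 + w)) * \<xi> - 1 = 0"
      and B: "\<tau> * (\<bar>V0\<bar> + w) \<le> 1" and C: "w \<ge> 0"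
    have "\<bar>\<tau> * (V0 - w)\<bar> \<le> 1" "\<bar>\<tau> * (V0 + w)\<bar> \<le> 1"
    proof -
      have t1: "\<bar>\<tau> * V0\<bar> = \<tau> * \<bar>V0\<bar>" using assms(6) by (simp add: abs_mult)
      have t2: "\<tau> * w \<ge> 0" using C assms(6) by simp
      have t3: "\<tau> * (\<bar>V0\<bar> + w) = \<tau> * \<bar>V0\<bar> + \<tau> * w" by (simp add: algebra_simps)
      have "\<tau> * (V0 - w) = \<tau> * V0 - \<tau> * w" "\<tau> * (V0 + w) = \<tau> * V0 + \<tau> * w" by (simp_all add: algebra_simps)
      then show "\<bar>\<tau> * (V0 - w)\<bar> \<le> 1" "\<bar>\<tau> * (V0 + w)\<bar> \<le> 1"
        using t1 t2 t3 B by (simp_all add: abs_le_iff) (smt (verit) abs_le_iff)+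
    qed
    then show ?thesis using A rootlem by blast
  qed
qed
end
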